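(* Let $\rho_1, \sigma_1$ be density operators on $\mathbb{C}^{d_1}$ and $\rho_2, \sigma_2$ density operators on $\mathbb{C}^{d_2}$. If either $D_{\min}(\rho_1\|\sigma_1)\ge D_{\max}(\rho_2\|\sigma_2)$ or $D_{\min}(\sigma_1\|\rho_1)\ge D_{\max}(\sigma_2\|\rho_2)$, then there exists a test-and-prepare channel $\mathcal{E}$ such that $\mathcal{E}(\rho_1)=\rho_2$ and $\mathcal{E}(\sigma_1)=\sigma_2$.
   Context: Logarithms are base 2. For density operators $\rho,\sigma$: $D_{\min}(\rho\|\sigma) := -\log \mathrm{tr}(\sigma \Pi_\rho)$, where $\Pi_\rho$ is the projector onto the support of $\rho$; $D_{\max}(\rho\|\sigma) := \inf\{\lambda\in\mathbb{R} : \rho \le 2^{\lambda}\sigma\}$ in the Löwner order (with $\inf\emptyset=+\infty$). A test-and-prepare channel is a map of the form $\mathcal{E}(X)=\gamma_1\,\mathrm{tr}(EX)+\gamma_2\,\mathrm{tr}((\mathds{1}-E)X)$ where $\gamma_1,\gamma_2$ are density operators and $0\le E\le \mathds{1}$. *)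

theory Defs
  imports "HOL-Analysis.Analysis"
begin

text \<open>Complex d x d matrices are modelled as complex^'n^'n with 'n a finite type, CARD('n) = d.\<close>

definition cadj :: "complex^'n^'n \<Rightarrow> complex^'n^'n" where
  "cadj A = (\<chi> i j. cnj (A $ j $ i))"

definition cscale :: "complex \<Rightarrow> complex^'n^'n \<Rightarrow> complex^'n^'n" where
  "cscale c A = (\<chi> i j. c * A $ i $ j)"

definition psd :: "complex^'n^'n \<Rightarrow> bool" where
  "psd A \<longleftrightarrow> (\<forall>v::complex^'n.
      let q = (\<Sum>i\<in>UNIV. cnj (v $ i) * (A *v v) $ i) in Im q = 0 \<and> Re q \<ge> 0)"

definition loewner_le :: "complex^'n^'n \<Rightarrow> complex^'n^'n \<Rightarrow> bool" where
  "loewner_le A B \<longleftrightarrow> psd (B - A)"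

definition density :: "complex^'n^'n \<Rightarrow> bool" where
  "density \<rho> \<longleftrightarrow> psd \<rho> \<and> trace \<rho> = 1"

definition supp_proj :: "complex^'n^'n \<Rightarrow> complex^'n^'n" where
  "supp_proj \<rho> = (THE P. P ** P = P \<and> cadj P = P \<and>
      range (\<lambda>v. P *v v) = range (\<lambda>v. \<rho> *v v))"

definition D_min :: "complex^'n^'n \<Rightarrow> complex^'n^'n \<Rightarrow> ereal" where
  "D_min \<rho> \<sigma> = (let t = Re (trace (\<sigma> ** supp_proj \<rho>)) in
      if t = 0 then \<infinity> else ereal (- log 2 t))"

text \<open>D_max(rho||sigma) = inf{lambda. rho \<le> 2^lambda sigma}, inf of the empty set = +infinity.\<close>
definition D_max :: "complex^'n^'n \<Rightarrow> complex^'n^'n \<Rightarrow> ereal" where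
  "D_max \<rho> \<sigma> = Inf {ereal l | l. loewner_le \<rho> (cscale (complex_of_real (2 powr l)) \<sigma>)}"

definition tp_channel :: "complex^'m^'m \<Rightarrow> complex^'m^'m \<Rightarrow> complex^'n^'n \<Rightarrow> complex^'n^'n \<Rightarrow> complex^'m^'m" where
  "tp_channel g1 g2 E X = cscale (trace (E ** X)) g1 + cscale (trace ((mat 1 - E) ** X)) g2"

definition is_test_and_prepare :: "(complex^'n^'n \<Rightarrow> complex^'m^'m) \<Rightarrow> bool" where
  "is_test_and_prepare \<E> \<longleftrightarrow> (\<exists>g1 g2 E. density g1 \<and> density g2 \<and> loewner_le 0 E \<and>
      loewner_le E (mat 1) \<and> \<E> = tp_channel g1 g2 E)"

end

theory Submission
  imports Defs
begin

definition cinner :: "complex^'n \<Rightarrow> complex^'n \<Rightarrow> complex" where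
  "cinner z w = (\<Sum>k\<in>UNIV. cnj (z$k) * w$k)"

lemma Re_cinner: "Re (cinner z w) = z \<bullet> w"
  by (simp add: cinner_def inner_vec_def inner_complex_def Re_sum)

lemma Im_cinner: "Im (cinner z w) = z \<bullet> ((- \<i>) *s w)"
  by (simp add: cinner_def inner_vec_def inner_complex_def Im_sum)

lemma inner_cscale: "(c *s z) \<bullet> (w::complex^'n) = z \<bullet> (cnj c *s w)"
  by (simp add: inner_vec_def inner_complex_def algebra_simps)

lemma cnj_cinner: "cnj (cinner z w) = cinner w z"
  by (simp add: cinner_def mult.commute)

lemma cinner_diff_left: "cinner (a - b) c = cinner a c - cinner b c"
  by (simp add: cinner_def sum_subtractf algebra_simps)
lemma cinner_diff_right: "cinner a (b - c) = cinner a b - cinner a c"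
  by (simp add: cinner_def sum_subtractf algebra_simps)
lemma cinner_axis: "cinner (axis j 1) x = x $ j"
  by (simp add: cinner_def axis_def if_distrib if_distribR cong: if_cong)

lemma cinner_zero_if_orth:
  assumes "\<And>c v. v \<in> V \<Longrightarrow> c *s v \<in> V" "\<forall>w\<in>V. orthogonal z w" "w \<in> V"
  shows "cinner z w = 0"
proof -
  have "(- \<i>) *s w \<in> V" using assms(1)[OF assms(3)] by blast
  then have "Re (cinner z w) = 0" "Im (cinner z w) = 0"
    using assms by (auto simp: Re_cinner Im_cinner orthogonal_def)
  then show ?thesis by (simp add: complex_eq_iff)
qed

lemma proj_exists:
  fixes V :: "(complex^'n) set"
  assumes sub: "subspace V" and cl: "\<And>c v. v \<in> V \<Longrightarrow> c *s v \<in> V"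
  shows "\<exists>P::complex^'n^'n. P ** P = P \<and> cadj P = P \<and> range (\<lambda>v. P *v v) = V"
proof -
  have spanV: "span V = V" using sub by (simp add: span_eq_iff)
  have ex: "\<exists>y. y \<in> V \<and> (\<forall>w\<in>V. orthogonal (x - y) w)" for x
  proof -
    obtain y z where "y \<in> span V" "\<And>w. w \<in> span V \<Longrightarrow> orthogonal z w" "x = y + z"
      using orthogonal_subspace_decomp_exists[of V x] by blast
    then show ?thesis using spanV by (intro exI[of _ y]) auto
  qed
  define p where "p x = (SOME y. y \<in> V \<and> (\<forall>w\<in>V. orthogonal (x - y) w))" for x
  have p1: "p x \<in> V" and p2: "\<forall>w\<in>V. orthogonal (x - p x) w" for x
    using someI_ex[OF ex[of x]] unfolding p_def by auto
  have uniq: "p x = y" if "y \<in> V" "\<forall>w\<in>V. orthogonal (x - y) w" for x y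
  proof -
    have d: "p x - y \<in> V" using p1 that sub subspace_diff by blast
    have e: "p x - y = (x - y) - (x - p x)" by simp
    have "(p x - y) \<bullet> (p x - y) = 0"
      unfolding e[of ] using p2[rule_format, OF d] that(2)[rule_format, OF d] d
      by (simp add: orthogonal_def inner_diff_left)
    then show ?thesis by simp
  qed
  have pid: "p y = y" if "y \<in> V" for y
    using uniq[OF that] by (simp add: orthogonal_def)
  have padd: "p (x + y) = p x + p y" for x y
  proof (rule uniq)
    show "p x + p y \<in> V" using p1 sub subspace_add by blast
    show "\<forall>w\<in>V. orthogonal (x + y - (p x + p y)) w"
    proof
      fix w assume "w \<in> V"
      then have "(x - p x) \<bullet> w = 0" "(y - p y) \<bullet> w = 0" using p2 by (auto simp: orthogonal_def)
      moreover have "x + y - (p x + p y) = (x - p x) + (y - p y)" by simp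
      ultimately show "orthogonal (x + y - (p x + p y)) w"
        by (simp only: orthogonal_def inner_add_left)
    qed
  qed
  have pscal: "p (c *s x) = c *s p x" for c x
  proof (rule uniq)
    show "c *s p x \<in> V" using p1 cl by blast
    show "\<forall>w\<in>V. orthogonal (c *s x - c *s p x) w"
    proof
      fix w assume "w \<in> V"
      then have "cnj c *s w \<in> V" using cl by blast
      then have "(x - p x) \<bullet> (cnj c *s w) = 0" using p2 by (auto simp: orthogonal_def)
      moreover have "c *s x - c *s p x = c *s (x - p x)" by (simp add: vec_eq_iff algebra_simps)
      ultimately show "orthogonal (c *s x - c *s p x) w"
        by (simp only: orthogonal_def inner_cscale)
    qed
  qed
  have p0: "p 0 = 0" using pid sub subspace_0 by blast
  have psum: "p (\<Sum>j\<in>A. f j) = (\<Sum>j\<in>A. p (f j))" if "finite A" for A and f :: "'n \<Rightarrow> _"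
    using that by (induction A rule: finite_induct) (auto simp: p0 padd)
  have cz: "cinner (x - p x) y = 0" if "y \<in> V" for x y
    using cinner_zero_if_orth[OF cl p2 that] by blast
  have pherm: "cinner (p x) y = cinner x (p y)" for x y
  proof -
    have "cinner x (p y) = cinner (p x) (p y)"
      using cz[OF p1, of x y] by (simp add: cinner_diff_left)
    moreover have "cinner (p x) y = cinner (p x) (p y)"
      using cz[OF p1, of y x] cnj_cinner[of "y - p y" "p x"] by (simp add: cinner_diff_right)
    ultimately show ?thesis by simp
  qed
  define P where "P = (\<chi> i j. p (axis j 1) $ i)"
  have Pv: "P *v v = p v" for v
  proof -
    have "p v = p (\<Sum>j\<in>UNIV. v$j *s axis j 1)" by (simp add: basis_expansion)
    also have "\<dots> = (\<Sum>j\<in>UNIV. v$j *s p (axis j 1))" by (simp add: psum pscal)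
    finally show ?thesis
      by (simp add: P_def vec_eq_iff matrix_vector_mult_def sum_component mult.commute)
  qed
  have "P ** P = P"
    by (simp add: matrix_eq matrix_vector_mul_assoc[symmetric] Pv pid p1)
  moreover have "cadj P = P"
  proof -
    have "cnj (p (axis i 1) $ j) = p (axis j 1) $ i" for i j
      by (metis cinner_axis cnj_cinner pherm)
    then show ?thesis by (simp add: cadj_def P_def vec_eq_iff)
  qed
  moreover have "range (\<lambda>v. P *v v) = V"
    using p1 pid by (auto simp: Pv image_def) (metis)
  ultimately show ?thesis by blast
qed

lemma cadj_mult: "cadj (A ** B) = cadj B ** cadj (A::complex^'n^'n)"
  by (simp add: cadj_def matrix_matrix_mult_def vec_eq_iff mult.commute)

lemma proj_unique:
  fixes P Q :: "complex^'n^'n"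
  assumes "P ** P = P" "cadj P = P" "Q ** Q = Q" "cadj Q = Q"
    and r: "range (\<lambda>v. P *v v) = range (\<lambda>v. Q *v v)"
  shows "P = Q"
proof -
  have PQ: "P ** Q = Q"
  proof (subst matrix_eq, intro allI)
    fix x
    obtain u where u: "Q *v x = P *v u" using r by (metis rangeI imageE)
    show "(P ** Q) *v x = Q *v x"
      by (metis matrix_vector_mul_assoc u assms(1))
  qed
  have QP: "Q ** P = P"
  proof (subst matrix_eq, intro allI)
    fix x
    obtain u where u: "P *v x = Q *v u" using r by (metis rangeI imageE)
    show "(Q ** P) *v x = P *v x"
      by (metis matrix_vector_mul_assoc u assms(3))
  qed
  have "Q = cadj (P ** Q)" using PQ assms by simp
  also have "\<dots> = Q ** P" using assms by (simp add: cadj_mult)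
  finally show ?thesis using QP by simp
qed

lemma supp_proj:
  fixes \<rho> :: "complex^'n^'n"
  shows "supp_proj \<rho> ** supp_proj \<rho> = supp_proj \<rho> \<and> cadj (supp_proj \<rho>) = supp_proj \<rho> \<and>
      range (\<lambda>v. supp_proj \<rho> *v v) = range (\<lambda>v. \<rho> *v v)"
proof -
  have sub: "subspace (range (\<lambda>v. \<rho> *v v))"
  proof -
    have l: "linear (\<lambda>v. \<rho> *v v)" by (rule matrix_vector_mul_linear)
    have a: "0 = \<rho> *v 0" by simp
    have b: "\<rho> *v x + \<rho> *v y = \<rho> *v (x + y)" for x y by (simp add: matrix_vector_right_distrib)
    have c: "c *\<^sub>R (\<rho> *v x) = \<rho> *v (c *\<^sub>R x)" for c x using linear_scale[OF l] by metis
    show ?thesis unfolding subspace_def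
    proof (intro conjI ballI allI)
      show "0 \<in> range (\<lambda>v. \<rho> *v v)" by (subst a) (rule rangeI)
    next
      fix x y assume "x \<in> range (\<lambda>v. \<rho> *v v)" "y \<in> range (\<lambda>v. \<rho> *v v)"
      then obtain u w where "x = \<rho> *v u" "y = \<rho> *v w" by blast
      then show "x + y \<in> range (\<lambda>v. \<rho> *v v)" by (simp add: b)
    next
      fix r x assume "x \<in> range (\<lambda>v. \<rho> *v v)"
      then obtain u where "x = \<rho> *v u" by blast
      then show "r *\<^sub>R x \<in> range (\<lambda>v. \<rho> *v v)" by (simp add: c)
    qed
  qed
  have cl: "c *s w \<in> range (\<lambda>v. \<rho> *v v)" if w: "w \<in> range (\<lambda>v. \<rho> *v v)" for c w
  proof -
    obtain u where "w = \<rho> *v u" using w by blast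
    moreover have "c *s (\<rho> *v u) = \<rho> *v (c *s u)"
      by (simp add: vec_eq_iff matrix_vector_mult_def sum_distrib_left algebra_simps)
    ultimately show ?thesis by auto
  qed
  have "\<exists>!P. P ** P = P \<and> cadj P = P \<and> range (\<lambda>v. P *v v) = range (\<lambda>v. \<rho> *v v)"
    using proj_exists[OF sub cl] proj_unique by metis
  from theI'[OF this] show ?thesis unfolding supp_proj_def by blast
qed

definition qf :: "complex^'n^'n \<Rightarrow> complex^'n \<Rightarrow> complex" where
  "qf A v = (\<Sum>i\<in>UNIV. cnj (v $ i) * (A *v v) $ i)"

lemma psd_iff: "psd A \<longleftrightarrow> (\<forall>v. Im (qf A v) = 0 \<and> 0 \<le> Re (qf A v))"
  by (simp add: psd_def qf_def Let_def)

lemma qf_diff: "qf (A - B) v = qf A v - qf B v"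
  by (simp add: qf_def matrix_vector_mult_diff_rdistrib sum_subtractf algebra_simps)

lemma qf_cscale: "qf (cscale c A) v = c * qf A v"
  by (simp add: qf_def cscale_def matrix_vector_mult_def sum_distrib_left algebra_simps)

lemma qf_cinner: "qf A v = cinner v (A *v v)"
  by (simp add: qf_def cinner_def)

lemma cinner_adj: "cinner v (A *v w) = cinner (cadj A *v v) w"
  apply (simp add: cinner_def cadj_def matrix_vector_mult_def sum_distrib_left sum_distrib_right)
  apply (subst sum.swap) apply (simp add: algebra_simps)
  done

lemma cinner_self: "Im (cinner x x) = 0" "0 \<le> Re (cinner x x)"
  by (simp_all add: cinner_def Im_sum Re_sum sum_nonneg)

definition hproj :: "complex^'n^'n \<Rightarrow> bool" where
  "hproj Q \<longleftrightarrow> Q ** Q = Q \<and> cadj Q = Q"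

lemma hproj_psd: assumes "hproj Q" shows "psd Q"
proof -
  have "qf Q v = cinner (Q *v v) (Q *v v)" for v
  proof -
    have "qf Q v = cinner v (Q *v (Q *v v))"
      using assms by (simp add: qf_cinner hproj_def matrix_vector_mul_assoc)
    also have "\<dots> = cinner (Q *v v) (Q *v v)" using assms by (simp add: cinner_adj hproj_def)
    finally show ?thesis .
  qed
  then show ?thesis by (simp add: psd_iff cinner_self)
qed

lemma hproj_compl: assumes "hproj Q" shows "hproj (mat 1 - Q)"
proof -
  have "(mat 1 - Q) ** (mat 1 - Q) = mat 1 - Q"
    using assms by (simp add: hproj_def matrix_eq matrix_vector_mul_assoc[symmetric]
        matrix_vector_mult_diff_rdistrib matrix_vector_mult_diff_distrib)
  moreover have "cadj (mat 1 - Q) = mat 1 - Q"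
  proof -
    have "cnj (Q$j$i) = Q$i$j" for i j using assms unfolding hproj_def cadj_def
      by (metis vec_lambda_beta)
    then show ?thesis by (simp add: cadj_def mat_def vec_eq_iff)
  qed
  ultimately show ?thesis by (simp add: hproj_def)
qed

lemma cnj_if01: "cnj (if P then 1 else 0) = (if P then 1 else 0)" by simp

lemma sum_delta_mult: fixes i :: "'n::finite" shows "(\<Sum>l\<in>UNIV. f l * (if l = i then 1 else 0)) = (f i :: 'a::semiring_1)"
proof -
  have "(\<Sum>l\<in>UNIV. f l * (if l = i then 1 else 0)) = (\<Sum>l\<in>UNIV. if l = i then f l else 0)"
    by (rule sum.cong) auto
  also have "\<dots> = f i" by simp
  finally show ?thesis .
qed

lemma sum_delta_mult': fixes i :: "'n::finite" shows "(\<Sum>l\<in>UNIV. (if l = i then 1 else 0) * f l) = (f i :: 'a::semiring_1)"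
proof -
  have "(\<Sum>l\<in>UNIV. (if l = i then 1 else 0) * f l) = (\<Sum>l\<in>UNIV. if l = i then f l else 0)"
    by (rule sum.cong) auto
  also have "\<dots> = f i" by simp
  finally show ?thesis .
qed

lemma mv2: "(A *v (axis i 1 + c *s axis j 1))$k = A$k$i + c * (A$k$j :: complex)"
proof -
  have "(A *v (axis i 1 + c *s axis j 1))$k = (\<Sum>l\<in>UNIV. A$k$l * (if l = i then 1 else 0)) + c * (\<Sum>l\<in>UNIV. A$k$l * (if l = j then 1 else 0))"
    unfolding matrix_vector_mult_def by (simp add: axis_def sum.distrib distrib_left mult.left_commute sum_distrib_left)
  then show ?thesis by (simp only: sum_delta_mult)
qed


lemma trace_hproj:
  assumes "hproj Q"
  shows "trace (A ** Q) = (\<Sum>i\<in>UNIV. qf A (column i Q))"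
proof -
  have h: "Q$i$k = cnj (Q$k$i)" for i k
    using assms unfolding hproj_def cadj_def by (metis vec_lambda_beta)
  have "trace (A ** Q) = trace ((A ** Q) ** Q)"
    using assms by (simp add: hproj_def matrix_mul_assoc[symmetric])
  also have "\<dots> = trace (Q ** (A ** Q))" by (rule trace_mul_sym)
  also have "\<dots> = (\<Sum>i\<in>UNIV. qf A (column i Q))"
    unfolding trace_def qf_def column_def matrix_matrix_mult_def matrix_vector_mult_def
  proof (intro sum.cong refl)
    fix i
    show "(\<chi> i j. \<Sum>k\<in>UNIV. Q $ i $ k * (\<chi> i j. \<Sum>k\<in>UNIV. A $ i $ k * Q $ k $ j) $ k $ j) $ i $ i =
      (\<Sum>ia\<in>UNIV. cnj ((\<chi> ia. Q $ ia $ i) $ ia) * (\<chi> ia. \<Sum>j\<in>UNIV. A $ ia $ j * (\<chi> ia. Q $ ia $ i) $ j) $ ia)"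
      by (simp add: h[of i])
  qed
  finally show ?thesis .
qed

lemma trace_hproj_nonneg:
  assumes "hproj Q" "psd A"
  shows "Im (trace (A ** Q)) = 0" "0 \<le> Re (trace (A ** Q))"
  using assms by (simp_all add: trace_hproj Im_sum Re_sum psd_iff sum_nonneg)

lemma qf_axis: "qf A (axis i 1) = A$i$i"
proof -
  have "(A *v axis i 1) $ k = A$k$i" for k
    unfolding matrix_vector_mult_def axis_def by (simp only: vec_lambda_beta sum_delta_mult)
  then show ?thesis unfolding qf_def axis_def by (simp only: vec_lambda_beta cnj_if01 sum_delta_mult')
qed

lemma qf_two:
  assumes "i \<noteq> j"
  shows "qf A (axis i 1 + c *s axis j 1) = A$i$i + c*A$i$j + cnj c * A$j$i + cnj c * c * A$j$j"
proof -
  have "qf A (axis i 1 + c *s axis j 1) = (\<Sum>k\<in>UNIV. (if k = i then 1 else 0) * (A$k$i + c * A$k$j)) + cnj c * (\<Sum>k\<in>UNIV. (if k = j then 1 else 0) * (A$k$i + c * A$k$j))"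
    unfolding qf_def mv2 by (simp only: cnj_if01 axis_def vec_lambda_beta vector_add_component vector_smult_component mult_1_right mult_zero_right complex_cnj_add complex_cnj_mult distrib_right sum.distrib sum_distrib_left mult.assoc)
  also have "\<dots> = A$i$i + c*A$i$j + cnj c * A$j$i + cnj c * c * A$j$j"
    by (simp only: sum_delta_mult') (simp add: algebra_simps)
  finally show ?thesis .
qed

lemma psd_trace0:
  fixes A :: "complex^'n^'n"
  assumes "psd A" "trace A = 0"
  shows "A = 0"
proof -
  have d1: "Im (A$i$i) = 0" "0 \<le> Re (A$i$i)" for i
    using assms(1) qf_axis[of A i] unfolding psd_iff by metis+
  have "(\<Sum>i\<in>UNIV. Re (A$i$i)) = 0" using assms(2) by (simp add: trace_def flip: Re_sum)
  then have "Re (A$i$i) = 0" for i using d1(2) by (simp add: sum_nonneg_eq_0_iff)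
  then have dz: "A$i$i = 0" for i using d1(1) by (simp add: complex_eq_iff)
  have "A$i$j = 0" if "i \<noteq> j" for i j
  proof -
    have q: "Im (c*A$i$j + cnj c * A$j$i) = 0 \<and> 0 \<le> Re (c*A$i$j + cnj c * A$j$i)" for c
    proof -
      have e: "qf A (axis i 1 + c *s axis j 1) = c*A$i$j + cnj c * A$j$i"
        using qf_two[OF that, of A c] dz by simp
      show ?thesis using assms(1) e unfolding psd_iff by metis
    qed
    have "Im (A$i$j + A$j$i) = 0" "Re (A$i$j + A$j$i) = 0"
      using q[of 1] q[of "-1"] by auto
    then have s: "A$i$j + A$j$i = 0" by (simp add: complex_eq_iff)
    have "Im (\<i> * A$i$j - \<i> * A$j$i) = 0" "Re (\<i> * A$i$j - \<i> * A$j$i) = 0"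
      using q[of "\<i>"] q[of "-\<i>"] by (auto simp: algebra_simps)
    then have "\<i> * A$i$j - \<i> * A$j$i = 0" by (simp add: complex_eq_iff)
    then have "A$i$j = A$j$i" by (simp add: right_diff_distrib[symmetric])
    then show ?thesis using s by simp
  qed
  then show ?thesis using dz unfolding vec_eq_iff by (metis zero_index)
qed

lemma mat_sub_mult: "(A - B) ** (C::complex^'n^'n) = A ** C - B ** C"
  by (simp add: matrix_matrix_mult_def vec_eq_iff sum_subtractf left_diff_distrib)

lemma mat_mult_sub: "(C::complex^'n^'n) ** (A - B) = C ** A - C ** B"
  by (simp add: matrix_matrix_mult_def vec_eq_iff sum_subtractf right_diff_distrib)

lemma trace_cscale: "trace (cscale c A) = c * trace A"
  by (simp add: trace_def cscale_def sum_distrib_left)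

lemma key_ineq:
  fixes \<rho>2 \<sigma>2 :: "complex^'m^'m"
  assumes p1: "psd \<rho>2" and p2: "psd \<sigma>2" and t0: "0 \<le> t"
    and h: "(if t = 0 then \<infinity> else ereal (- log 2 t)) \<ge> D_max \<rho>2 \<sigma>2"
  shows "t * Re (qf \<rho>2 v) \<le> Re (qf \<sigma>2 v)"
proof (rule ccontr)
  define a where "a = Re (qf \<sigma>2 v)"
  define b where "b = Re (qf \<rho>2 v)"
  have a0: "0 \<le> a" using p2 by (simp add: a_def psd_iff)
  have b0: "0 \<le> b" using p1 by (simp add: b_def psd_iff)
  assume "\<not> t * Re (qf \<rho>2 v) \<le> Re (qf \<sigma>2 v)"
  then have lt: "a < t * b" by (simp add: a_def b_def)
  have tpos: "t > 0" using lt a0 t0 by (cases "t = 0") auto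
  have bpos: "b > 0" using lt a0 tpos b0 by (cases "b = 0") auto
  have hD: "ereal (- log 2 t) \<ge> D_max \<rho>2 \<sigma>2" using h tpos by simp
  have feas: "b \<le> 2 powr l * a" if "loewner_le \<rho>2 (cscale (complex_of_real (2 powr l)) \<sigma>2)" for l
  proof -
    have "0 \<le> Re (qf (cscale (complex_of_real (2 powr l)) \<sigma>2 - \<rho>2) v)"
      using that by (simp add: loewner_le_def psd_iff)
    then show ?thesis by (simp add: qf_diff qf_cscale a_def b_def)
  qed
  show False
  proof (cases "a = 0")
    case True
    then have "{ereal l | l. loewner_le \<rho>2 (cscale (complex_of_real (2 powr l)) \<sigma>2)} = {}"
      using feas bpos by force
    then have "D_max \<rho>2 \<sigma>2 = \<infinity>" by (simp add: D_max_def top_ereal_def)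
    then show False using hD by simp
  next
    case False
    then have apos: "a > 0" using a0 by simp
    have "ereal (log 2 (b / a)) \<le> D_max \<rho>2 \<sigma>2"
      unfolding D_max_def
    proof (rule Inf_greatest, clarify)
      fix l assume "loewner_le \<rho>2 (cscale (complex_of_real (2 powr l)) \<sigma>2)"
      then have "b / a \<le> 2 powr l" using feas apos by (simp add: divide_le_eq mult.commute)
      then have "log 2 (b / a) \<le> log 2 (2 powr l)" using apos bpos log_le_cancel_iff[of 2 "b/a" "2 powr l"] by simp
      then show "ereal (log 2 (b / a)) \<le> ereal l" by simp
    qed
    moreover have "- log 2 t < log 2 (b / a)"
    proof -
      have "1 / t < b / a" using lt apos tpos by (simp add: field_simps)
      then have "log 2 (1 / t) < log 2 (b / a)" using apos bpos tpos by (simp add: log_less_cancel_iff)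
      moreover have "log 2 (1 / t) = - log 2 t" using tpos by (simp add: log_divide)
      ultimately show ?thesis by simp
    qed
    ultimately show False using hD by (metis ereal_less_eq(3) linorder_not_le order_trans)
  qed
qed

lemma case1:
  fixes \<rho>1 \<sigma>1 :: "complex^'n^'n" and \<rho>2 \<sigma>2 :: "complex^'m^'m"
  assumes d1: "density \<rho>1" and d2: "density \<sigma>1" and d3: "density \<rho>2" and d4: "density \<sigma>2"
    and h: "D_min \<rho>1 \<sigma>1 \<ge> D_max \<rho>2 \<sigma>2"
  shows "\<exists>\<E>. is_test_and_prepare \<E> \<and> \<E> \<rho>1 = \<rho>2 \<and> \<E> \<sigma>1 = \<sigma>2"
proof -
  define P where "P = supp_proj \<rho>1"
  have hP: "hproj P" using supp_proj[of \<rho>1] by (simp add: hproj_def P_def)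
  have rP: "range (\<lambda>v. P *v v) = range (\<lambda>v. \<rho>1 *v v)" using supp_proj[of \<rho>1] P_def by simp
  have PP: "P ** P = P" using hP by (simp add: hproj_def)
  have Pr: "P ** \<rho>1 = \<rho>1"
  proof (subst matrix_eq, intro allI)
    fix x
    obtain u where u: "\<rho>1 *v x = P *v u" using rP by (metis rangeI imageE)
    show "(P ** \<rho>1) *v x = \<rho>1 *v x"
      by (metis matrix_vector_mul_assoc u PP)
  qed
  have ps1: "psd \<sigma>1" and ps3: "psd \<rho>2" and ps4: "psd \<sigma>2"
    and tr1: "trace \<rho>1 = 1" and tr2: "trace \<sigma>1 = 1" and tr3: "trace \<rho>2 = 1" and tr4: "trace \<sigma>2 = 1"
    using d1 d2 d3 d4 by (auto simp: density_def)
  define t where "t = Re (trace (\<sigma>1 ** P))"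
  have T: "trace (\<sigma>1 ** P) = complex_of_real t"
    using trace_hproj_nonneg(1)[OF hP ps1] by (simp add: t_def complex_eq_iff)
  have t0: "0 \<le> t" using trace_hproj_nonneg(2)[OF hP ps1] by (simp add: t_def)
  have "trace (\<sigma>1 ** (mat 1 - P)) = 1 - complex_of_real t"
    by (simp add: mat_mult_sub trace_sub tr2 T)
  then have t1: "t \<le> 1" using trace_hproj_nonneg(2)[OF hproj_compl[OF hP] ps1] by simp
  have trP1: "trace (P ** \<sigma>1) = complex_of_real t" using T trace_mul_sym by metis
  have trQ1: "trace ((mat 1 - P) ** \<sigma>1) = 1 - complex_of_real t"
    by (simp add: mat_sub_mult trace_sub tr2 trP1)
  have trPr: "trace (P ** \<rho>1) = 1" using Pr tr1 by simp
  have trQr: "trace ((mat 1 - P) ** \<rho>1) = 0" by (simp add: mat_sub_mult trace_sub tr1 trPr)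
  have hD: "(if t = 0 then \<infinity> else ereal (- log 2 t)) \<ge> D_max \<rho>2 \<sigma>2"
    using h unfolding D_min_def Let_def t_def P_def by assumption
  have key: "t * Re (qf \<rho>2 v) \<le> Re (qf \<sigma>2 v)" for v
    by (rule key_ineq[OF ps3 ps4 t0 hD])
  have E0: "loewner_le 0 P" using hproj_psd[OF hP] by (simp add: loewner_le_def)
  have E1: "loewner_le P (mat 1)" using hproj_psd[OF hproj_compl[OF hP]] by (simp add: loewner_le_def)
  show ?thesis
  proof (cases "t = 1")
    case True
    have "psd (\<sigma>2 - \<rho>2)" using key ps3 ps4 True by (simp add: psd_iff qf_diff)
    moreover have "trace (\<sigma>2 - \<rho>2) = 0" by (simp add: trace_sub tr3 tr4)
    ultimately have "\<sigma>2 - \<rho>2 = 0" by (rule psd_trace0)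
    then have eq: "\<sigma>2 = \<rho>2" by simp
    let ?E = "tp_channel \<rho>2 \<rho>2 P"
    have "is_test_and_prepare ?E" unfolding is_test_and_prepare_def using d3 E0 E1 by blast
    moreover have "?E \<rho>1 = \<rho>2"
      by (simp add: tp_channel_def trPr trQr cscale_def vec_eq_iff)
    moreover have "?E \<sigma>1 = \<sigma>2"
      by (simp add: tp_channel_def trP1 trQ1 True eq cscale_def vec_eq_iff)
    ultimately show ?thesis by blast
  next
    case False
    then have tl: "t < 1" using t1 by simp
    define g where "g = cscale (complex_of_real (1 / (1 - t))) (\<sigma>2 - cscale (complex_of_real t) \<rho>2)"
    have "psd g"
    proof -
      have "Im (qf g v) = 0 \<and> 0 \<le> Re (qf g v)" for v
      proof -
        have "Im (qf \<rho>2 v) = 0" "Im (qf \<sigma>2 v) = 0" using ps3 ps4 by (auto simp: psd_iff)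
        moreover have "0 \<le> Re (qf \<sigma>2 v) - t * Re (qf \<rho>2 v)" using key[of v] by simp
        ultimately show ?thesis using tl
          by (simp add: g_def qf_cscale qf_diff)
      qed
      then show ?thesis by (simp add: psd_iff)
    qed
    moreover have "trace g = 1"
    proof -
      have "complex_of_real t \<noteq> 1" using False by (metis of_real_1 of_real_eq_iff)
      then show ?thesis using tl
        by (simp add: g_def trace_cscale trace_sub tr3 tr4 field_simps)
    qed
    ultimately have dg: "density g" by (simp add: density_def)
    let ?E = "tp_channel \<rho>2 g P"
    have "is_test_and_prepare ?E" unfolding is_test_and_prepare_def using d3 dg E0 E1 by blast
    moreover have "?E \<rho>1 = \<rho>2"
      by (simp add: tp_channel_def trPr trQr cscale_def vec_eq_iff)
    moreover have "?E \<sigma>1 = \<sigma>2"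
    proof -
      have ne: "1 - complex_of_real t \<noteq> 0" using False
        by (metis eq_iff_diff_eq_0 of_real_1 of_real_eq_iff)
      have ne': "1 - t \<noteq> 0" using False by simp
      show ?thesis using ne ne'
        by (simp add: tp_channel_def trP1 trQ1 g_def cscale_def vec_eq_iff field_simps)
    qed
    ultimately show ?thesis by blast
  qed
qed

theorem corollary1:
  fixes \<rho>1 \<sigma>1 :: "complex^'n^'n" and \<rho>2 \<sigma>2 :: "complex^'m^'m"
  assumes "density \<rho>1" and "density \<sigma>1" and "density \<rho>2" and "density \<sigma>2"
    and "D_min \<rho>1 \<sigma>1 \<ge> D_max \<rho>2 \<sigma>2 \<or> D_min \<sigma>1 \<rho>1 \<ge> D_max \<sigma>2 \<rho>2"
  shows "\<exists>\<E>. is_test_and_prepare \<E> \<and> \<E> \<rho>1 = \<rho>2 \<and> \<E> \<sigma>1 = \<sigma>2"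
  using assms(5)
proof
  assume "D_min \<rho>1 \<sigma>1 \<ge> D_max \<rho>2 \<sigma>2"
  then show ?thesis using case1 assms(1-4) by blast
next
  assume "D_min \<sigma>1 \<rho>1 \<ge> D_max \<sigma>2 \<rho>2"
  then show ?thesis using case1[OF assms(2) assms(1) assms(4) assms(3)] by blast
qed

end
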